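(* Let $\mu$ be a stationary ergodic, elliptic and non-degenerate probability measure on $\Omega$ with $\mathbb P^1(S_+)>0$. Then for every $\epsilon>0$ there is $y\in\mathbb Z_+$ with $\mathbb P^y(S_+)>1-\epsilon$.
   Context: Notation: $\mathbb N=\{1,2,\dots\}$, $\mathbb Z_+=\{0,1,2,\dots\}$. Cookie environments $\omega\in\Omega=[0,1]^{\mathbb Z\times\mathbb N}$; shift $(\theta\omega)(x,n)=\omega(x+1,n)$; $\mu$ stationary ergodic means $\theta$-invariant and ergodic; elliptic means $\mu((0,1)^{\mathbb Z\times\mathbb N})=1$. Random arrow environment: $a(x,n)=\mathbf 1_{\{u(x,n)<\omega(x,n)\}}$ with $u(x,n)$ i.i.d. Uniform$[0,1]$ independent of $\omega\sim\mu$; $\mathbb P$ denotes the joint law of $(\omega,u)$. A sequence $b\in\{0,1\}^{\mathbb N}$ is non-degenerate if $b(i)\ne b(i+1)$ for infinitely many $i$; $\mu$ is non-degenerate if $\mathbb P$-a.s. every $a(x,\cdot)$ is non-degenerate. For non-degenerate $b$: $U^+_b(0)=0$ and for $x\ge1$, $U^+_b(x)$ is the number of indices $i$ with $b(i)=1$ preceding the $x$-th index $j$ with $b(j)=0$. For $y\in\mathbb Z_+$: $Z^+_0=y$, $Z^+_n=U^+_{a(n-1,\cdot)}(Z^+_{n-1})$. $\mathbb P^y$ denotes $\mathbb P$ applied to events about $Z^+$ with initial value $y$. $S_+=\{Z^+_n>0\ \forall n\ge0\}$. *)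

theory Defs
  imports "HOL-Probability.Probability" "HOL-Library.Infinite_Set"
begin

text \<open>Cookie environments. Cookie index is 0-based: coordinate (x, n) with n :: nat
  represents the paper's cookie number n+1 at site x.\<close>

definition Omega_M :: "((int \<times> nat) \<Rightarrow> real) measure" where
  "Omega_M = PiM UNIV (\<lambda>_. restrict_space borel {0..1::real})"

definition shift :: "((int \<times> nat) \<Rightarrow> real) \<Rightarrow> ((int \<times> nat) \<Rightarrow> real)" where
  "shift \<omega> = (\<lambda>(x, n). \<omega> (x + 1, n))"

definition stationary :: "((int \<times> nat) \<Rightarrow> real) measure \<Rightarrow> bool" where
  "stationary \<mu> \<longleftrightarrow> sets \<mu> = sets Omega_M \<and> distr \<mu> Omega_M shift = \<mu>"

definition ergodic :: "((int \<times> nat) \<Rightarrow> real) measure \<Rightarrow> bool" where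
  "ergodic \<mu> \<longleftrightarrow> (\<forall>A\<in>sets \<mu>. shift -` A \<inter> space \<mu> = A \<longrightarrow>
      measure \<mu> A = 0 \<or> measure \<mu> A = 1)"

definition elliptic :: "((int \<times> nat) \<Rightarrow> real) measure \<Rightarrow> bool" where
  "elliptic \<mu> \<longleftrightarrow>
     measure \<mu> {\<omega> \<in> space \<mu>. \<forall>x n. 0 < \<omega> (x, n) \<and> \<omega> (x, n) < 1} = 1"

definition U_M :: "((int \<times> nat) \<Rightarrow> real) measure" where
  "U_M = PiM UNIV (\<lambda>_. uniform_measure lborel {0..1::real})"

definition joint :: "((int \<times> nat) \<Rightarrow> real) measure \<Rightarrow>
    (((int \<times> nat) \<Rightarrow> real) \<times> ((int \<times> nat) \<Rightarrow> real)) measure" where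
  "joint \<mu> = \<mu> \<Otimes>\<^sub>M U_M"

text \<open>Arrow environment a(x,n) = 1 iff u(x,n) < omega(x,n); True encodes 1.\<close>

definition arrow :: "((int \<times> nat) \<Rightarrow> real) \<Rightarrow> ((int \<times> nat) \<Rightarrow> real) \<Rightarrow> int \<Rightarrow> nat \<Rightarrow> bool" where
  "arrow \<omega> u x n \<longleftrightarrow> u (x, n) < \<omega> (x, n)"

definition nondegenerate_seq :: "(nat \<Rightarrow> bool) \<Rightarrow> bool" where
  "nondegenerate_seq b \<longleftrightarrow> infinite {i. b i \<noteq> b (Suc i)}"

definition nondegenerate :: "((int \<times> nat) \<Rightarrow> real) measure \<Rightarrow> bool" where
  "nondegenerate \<mu> \<longleftrightarrow>
     (AE p in joint \<mu>. \<forall>x. nondegenerate_seq (arrow (fst p) (snd p) x))"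

text \<open>U^+_b(x): for x \<ge> 1, the number of indices i with b i preceding the x-th index j
  with \<not> b j (the x-th zero is enumerate {j. \<not> b j} (x - 1)).\<close>

definition Uplus :: "(nat \<Rightarrow> bool) \<Rightarrow> nat \<Rightarrow> nat" where
  "Uplus b x = (if x = 0 then 0 else card {i. i < enumerate {j. \<not> b j} (x - 1) \<and> b i})"

primrec Zplus :: "((int \<times> nat) \<Rightarrow> real) \<Rightarrow> ((int \<times> nat) \<Rightarrow> real) \<Rightarrow> nat \<Rightarrow> nat \<Rightarrow> nat" where
  "Zplus \<omega> u y 0 = y"
| "Zplus \<omega> u y (Suc n) = Uplus (arrow \<omega> u (int n)) (Zplus \<omega> u y n)"

definition PS :: "((int \<times> nat) \<Rightarrow> real) measure \<Rightarrow> nat \<Rightarrow> real" where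
  "PS \<mu> y = measure (joint \<mu>) {p \<in> space (joint \<mu>). \<forall>n. 0 < Zplus (fst p) (snd p) y n}"

end

theory Submission
  imports Defs
begin


primrec Zp :: "(int \<Rightarrow> nat \<Rightarrow> bool) \<Rightarrow> nat \<Rightarrow> nat \<Rightarrow> nat" where
  "Zp a y 0 = y"
| "Zp a y (Suc n) = Uplus (a (int n)) (Zp a y n)"

lemma Zplus_Zp: "Zplus \<omega> u y n = Zp (arrow \<omega> u) y n"
  by (induction n) auto

lemma Zp_add: "Zp a y (k + n) = Zp (\<lambda>x. a (x + int k)) (Zp a y k) n"
  by (induction n) (auto simp: add.commute)

definition good :: "(nat \<Rightarrow> bool) \<Rightarrow> bool" where
  "good b \<longleftrightarrow> infinite {j. \<not> b j} \<and> infinite {j. b j}"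

lemma fin_changes: assumes "finite {j. \<not> c j}" shows "finite {i. c i \<noteq> c (Suc i)}"
proof -
  have "finite (Suc -` {j. \<not> c j})" using assms by (intro finite_vimageI) auto
  then have "finite ({j. \<not> c j} \<union> Suc -` {j. \<not> c j})" using assms by blast
  then show ?thesis by (rule finite_subset[rotated]) auto
qed

lemma nondeg_good: assumes "nondegenerate_seq b" shows "good b"
proof -
  have inf: "infinite {i. b i \<noteq> b (Suc i)}" using assms by (simp add: nondegenerate_seq_def)
  have "finite {i. b i \<noteq> b (Suc i)}" if "finite {j. \<not> b j}" using fin_changes[OF that] .
  moreover have "finite {i. b i \<noteq> b (Suc i)}" if "finite {j. b j}"
    using fin_changes[of "\<lambda>j. \<not> b j"] that by auto
  ultimately show ?thesis using inf unfolding good_def by blast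
qed

lemma Uplus_0[simp]: "Uplus b 0 = 0" by (simp add: Uplus_def)

lemma Uplus_mono: assumes "infinite {j. \<not> b j}" "x \<le> x'" shows "Uplus b x \<le> Uplus b x'"
proof (cases "x = 0")
  case True then show ?thesis by simp
next
  case False
  let ?Z = "{j. \<not> b j}"
  have "enumerate ?Z (x - 1) \<le> enumerate ?Z (x' - 1)"
    using assms enumerate_mono[of "x - 1" "x' - 1" ?Z] by (cases "x = x'") auto
  then have "{i. i < enumerate ?Z (x - 1) \<and> b i} \<subseteq> {i. i < enumerate ?Z (x' - 1) \<and> b i}" by auto
  moreover have "finite {i. i < enumerate ?Z (x' - 1) \<and> b i}" by simp
  ultimately show ?thesis using False assms by (simp add: Uplus_def card_mono)
qed

lemma Uplus_unbounded: assumes "good b" shows "\<exists>x. m \<le> Uplus b x"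
proof -
  let ?Z = "{j. \<not> b j}"
  obtain X where X: "X \<subseteq> {j. b j}" "finite X" "card X = m"
    using assms infinite_arbitrarily_large unfolding good_def by blast
  obtain N where N: "X \<subseteq> {..<N}" using finite_nat_bounded[OF X(2)] by blast
  have "N \<le> enumerate ?Z N" using assms le_enumerate unfolding good_def by blast
  then have "X \<subseteq> {i. i < enumerate ?Z N \<and> b i}" using X N by auto
  then have "m \<le> card {i. i < enumerate ?Z N \<and> b i}" using X by (metis card_mono finite_Collect_conjI finite_Collect_less_nat)
  then have "m \<le> Uplus b (Suc N)" by (simp add: Uplus_def)
  then show ?thesis by blast
qed

definition goodA :: "(int \<Rightarrow> nat \<Rightarrow> bool) \<Rightarrow> bool" where
  "goodA a \<longleftrightarrow> (\<forall>x. good (a x))"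

lemma goodA_shift: "goodA a \<Longrightarrow> goodA (\<lambda>x. a (x + k))"
  by (simp add: goodA_def)

lemma Zp_mono: assumes "goodA a" "y \<le> y'" shows "Zp a y n \<le> Zp a y' n"
  using assms by (induction n) (auto intro!: Uplus_mono simp: goodA_def good_def)

lemma Zp_zero: "Zp a 0 n = 0"
  by (induction n) auto

lemma Zp_absorb: assumes "Zp a y k = 0" "k \<le> n" shows "Zp a y n = 0"
proof -
  obtain d where "n = k + d" using assms by (metis le_add_diff_inverse)
  then show ?thesis using assms by (simp add: Zp_add Zp_zero)
qed

lemma Zp_unbounded: assumes "goodA a" shows "\<exists>Y. m \<le> Zp a Y n"
  using assms
proof (induction n arbitrary: m)
  case 0 then show ?case by auto
next
  case (Suc n)
  obtain x where x: "m \<le> Uplus (a (int n)) x" using Uplus_unbounded Suc.prems goodA_def by blast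
  obtain Y where Y: "x \<le> Zp a Y n" using Suc by blast
  have "Uplus (a (int n)) x \<le> Uplus (a (int n)) (Zp a Y n)"
    using Y Suc.prems by (intro Uplus_mono) (auto simp: goodA_def good_def)
  then show ?case using x by (intro exI[of _ Y]) auto
qed

lemma Zp_unbounded': assumes "goodA a" shows "\<exists>Y. \<forall>y\<ge>Y. m \<le> Zp a y n"
proof -
  obtain Y where "m \<le> Zp a Y n" using Zp_unbounded assms by blast
  then show ?thesis using Zp_mono[OF assms] by (meson order_trans)
qed

lemma Zp_couple:
  assumes "goodA a" "1 \<le> Zp a y k" "\<forall>n. 0 < Zp (\<lambda>x. a (x + int k)) 1 n"
  shows "0 < Zp a y n"
proof (cases "k \<le> n")
  case True
  then obtain d where d: "n = k + d" by (metis le_add_diff_inverse)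
  have "Zp (\<lambda>x. a (x + int k)) 1 d \<le> Zp (\<lambda>x. a (x + int k)) (Zp a y k) d"
    using assms by (intro Zp_mono goodA_shift) auto
  then show ?thesis using assms(3) d by (metis Zp_add gr0I le_zero_eq not_gr_zero)
next
  case False
  show ?thesis
  proof (rule ccontr)
    assume "\<not> 0 < Zp a y n"
    then have "Zp a y k = 0" using Zp_absorb[of a y n k] False by auto
    then show False using assms by simp
  qed
qed



lemma enum_L1: "s \<in> S \<Longrightarrow> card {j\<in>S. j < s} = k \<Longrightarrow> enumerate S k = (s::nat)"
proof (induction k arbitrary: S s)
  case 0
  have "finite {j\<in>S. j < s}" by simp
  then have "{j\<in>S. j < s} = {}" using 0 by simp
  then show ?case using 0 by (auto intro!: Least_equality simp: not_less enumerate_0)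
next
  case (Suc k)
  define m where "m = (LEAST n. n \<in> S)"
  have fin: "finite {j\<in>S. j < s}" by simp
  then obtain j where j: "j \<in> S" "j < s" using Suc.prems by (metis (no_types, lifting) card.empty empty_Collect_eq nat.distinct(1))
  have "m \<le> j" using j unfolding m_def by (simp add: Least_le)
  then have ms: "m < s" using j by simp
  have mS: "m \<in> S" using j unfolding m_def by (metis LeastI)
  have "{j\<in>S - {m}. j < s} = {j\<in>S. j < s} - {m}" by auto
  then have "card {j\<in>S - {m}. j < s} = k" using Suc.prems ms mS fin by simp
  then have "enumerate (S - {m}) k = s" using Suc.IH[of s "S - {m}"] Suc.prems ms by simp
  then show ?case by (simp add: m_def enumerate_Suc)
qed

lemma enum_empty: "enumerate ({}::nat set) k = enumerate {} 0"
  by (induction k) (auto simp: enumerate_Suc)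

lemma enum_L2: "(\<forall>s\<in>S. card {j\<in>S. j < s} \<noteq> k) \<Longrightarrow> enumerate S k = enumerate ({}::nat set) 0"
proof (induction k arbitrary: S)
  case 0
  show ?case
  proof (cases "S = {}")
    case False
    define m where "m = (LEAST n. n \<in> S)"
    have mS: "m \<in> S" using False unfolding m_def by (metis LeastI ex_in_conv)
    have "{j\<in>S. j < m} = {}" unfolding m_def using not_less_Least by auto
    then show ?thesis using 0 mS by (auto simp: m_def)
  qed simp
next
  case (Suc k)
  show ?case
  proof (cases "S = {}")
    case True then show ?thesis using enum_empty by simp
  next
    case False
    define m where "m = (LEAST n. n \<in> S)"
    have mS: "m \<in> S" using False unfolding m_def by (metis LeastI ex_in_conv)
    have "\<forall>s\<in>S - {m}. card {j\<in>S - {m}. j < s} \<noteq> k"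
    proof
      fix s assume s: "s \<in> S - {m}"
      have "m \<le> s" using s unfolding m_def by (simp add: Least_le)
      then have ms: "m < s" using s by auto
      have "{j\<in>S - {m}. j < s} = {j\<in>S. j < s} - {m}" by auto
      moreover have "finite {j\<in>S. j < s}" by simp
      ultimately have "card {j\<in>S - {m}. j < s} = card {j\<in>S. j < s} - 1" using ms mS by simp
      moreover have "card {j\<in>S. j < s} \<noteq> Suc k" using Suc.prems s by auto
      moreover have "card {j\<in>S. j < s} \<noteq> 0" using ms mS by auto
      ultimately show "card {j\<in>S - {m}. j < s} \<noteq> k" by linarith
    qed
    then show ?thesis using Suc.IH[of "S - {m}"] by (simp add: m_def enumerate_Suc)
  qed
qed

lemma enum_char: "enumerate S k = (t::nat) \<longleftrightarrow>
   (t \<in> S \<and> card {j\<in>S. j < t} = k) \<or> (t = enumerate {} 0 \<and> (\<forall>s\<in>S. card {j\<in>S. j < s} \<noteq> k))"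
proof
  assume e: "enumerate S k = t"
  show "(t \<in> S \<and> card {j\<in>S. j < t} = k) \<or> (t = enumerate {} 0 \<and> (\<forall>s\<in>S. card {j\<in>S. j < s} \<noteq> k))"
  proof (cases "\<exists>s\<in>S. card {j\<in>S. j < s} = k")
    case True
    then obtain s where "s \<in> S" "card {j\<in>S. j < s} = k" by blast
    then show ?thesis using e enum_L1 by metis
  next
    case False
    then show ?thesis using e enum_L2 by metis
  qed
next
  assume "(t \<in> S \<and> card {j\<in>S. j < t} = k) \<or> (t = enumerate {} 0 \<and> (\<forall>s\<in>S. card {j\<in>S. j < s} \<noteq> k))"
  then show "enumerate S k = t"
  proof
    assume "t \<in> S \<and> card {j\<in>S. j < t} = k" then show ?thesis using enum_L1 by blast
  next
    assume "t = enumerate {} 0 \<and> (\<forall>s\<in>S. card {j\<in>S. j < s} \<noteq> k)" then show ?thesis using enum_L2 by blast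
  qed
qed

lemma measurable_FD:
  fixes b :: "'p \<Rightarrow> nat \<Rightarrow> bool" and G :: "(nat \<Rightarrow> bool) \<Rightarrow> 'c"
  assumes hb: "\<And>j. j < t \<Longrightarrow> (\<lambda>p. b p j) \<in> N \<rightarrow>\<^sub>M count_space UNIV"
    and hG: "\<And>c c'. (\<And>j. j < t \<Longrightarrow> c j = c' j) \<Longrightarrow> G c = G c'"
  shows "(\<lambda>p. G (b p)) \<in> N \<rightarrow>\<^sub>M count_space UNIV"
proof -
  define L where "L p = map (b p) [0..<t]" for p
  define G' where "G' l = G (\<lambda>j. if j < t then l ! j else False)" for l
  have eq: "G (b p) = G' (L p)" for p unfolding G'_def L_def by (rule hG) simp
  have "L \<in> N \<rightarrow>\<^sub>M count_space UNIV"
  proof (subst measurable_count_space_eq2_countable, safe)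
    fix l :: "bool list"
    have "L -` {l} \<inter> space N = {p\<in>space N. length l = t \<and> (\<forall>j\<in>{..<t}. b p j = l ! j)}"
    proof -
      have "map (b p) [0..<t] = l \<longleftrightarrow> length l = t \<and> (\<forall>j\<in>{..<t}. b p j = l ! j)" for p
        unfolding list_eq_iff_nth_eq by force
      then show ?thesis unfolding L_def by blast
    qed
    also have "\<dots> \<in> sets N"
    proof (cases "length l = t")
      case True
      have "{p\<in>space N. b p j = l ! j} \<in> sets N" if j: "j \<in> {..<t}" for j
      proof -
        have 1: "{p\<in>space N. b p j} \<in> sets N" using hb[of j] j by (simp add: pred_def)
        show ?thesis
        proof (cases "l ! j")
          case True then show ?thesis using 1 by simp
        next
          case False
          have "{p\<in>space N. b p j = l ! j} = space N - {p\<in>space N. b p j}" using False by auto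
          then show ?thesis using 1 by auto
        qed
      qed
      then have "{p\<in>space N. \<forall>j\<in>{..<t}. b p j = l ! j} \<in> sets N"
        by (intro sets.sets_Collect_finite_All) auto
      then show ?thesis using True by simp
    qed simp
    finally show "L -` {l} \<inter> space N \<in> sets N" .
  qed simp
  then show ?thesis unfolding eq by (rule measurable_compose) simp
qed

lemma measurable_enum:
  fixes b :: "'p \<Rightarrow> nat \<Rightarrow> bool"
  assumes hb: "\<And>j. (\<lambda>p. b p j) \<in> N \<rightarrow>\<^sub>M count_space UNIV"
  shows "(\<lambda>p. enumerate {j. \<not> b p j} k) \<in> N \<rightarrow>\<^sub>M count_space UNIV"
proof (subst measurable_count_space_eq2_countable, safe)
  fix t
  define P where "P p s \<longleftrightarrow> \<not> b p s \<and> card {j. j < s \<and> \<not> b p j} = k" for p s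
  have hP: "(\<lambda>p. P p s) \<in> N \<rightarrow>\<^sub>M count_space UNIV" for s
    unfolding P_def
    by (rule measurable_FD[where t="Suc s" and G="\<lambda>c. \<not> c s \<and> card {j. j < s \<and> \<not> c j} = k"], rule hb)
       (auto intro!: arg_cong[where f=card])
  have "(\<lambda>p. enumerate {j. \<not> b p j} k) -` {t} \<inter> space N = {p\<in>space N. P p t \<or> (t = enumerate {} 0 \<and> (\<forall>s. \<not> P p s))}"
  proof -
    have "enumerate {j. \<not> b p j} k = t \<longleftrightarrow> P p t \<or> (t = enumerate {} 0 \<and> (\<forall>s. \<not> P p s))" for p
    proof -
      have e: "{j\<in>{j. \<not> b p j}. j < s} = {j. j < s \<and> \<not> b p j}" for s by auto
      show ?thesis unfolding enum_char e P_def by auto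
    qed
    then show ?thesis by auto
  qed
  also have "\<dots> \<in> sets N" using hP by measurable
  finally show "(\<lambda>p. enumerate {j. \<not> b p j} k) -` {t} \<inter> space N \<in> sets N" .
qed simp

lemma measurable_Uplus:
  fixes b :: "'p \<Rightarrow> nat \<Rightarrow> bool"
  assumes hb: "\<And>j. (\<lambda>p. b p j) \<in> N \<rightarrow>\<^sub>M count_space UNIV"
  shows "(\<lambda>p. Uplus (b p) x) \<in> N \<rightarrow>\<^sub>M count_space UNIV"
proof (cases "x = 0")
  case True then show ?thesis by simp
next
  case False
  have c: "(\<lambda>p. card {i. i < t \<and> b p i}) \<in> N \<rightarrow>\<^sub>M count_space UNIV" for t
    by (rule measurable_FD[where t=t and G="\<lambda>c. card {i. i < t \<and> c i}"], rule hb)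
       (auto intro!: arg_cong[where f=card])
  have "(\<lambda>p. card {i. i < enumerate {j. \<not> b p j} (x - 1) \<and> b p i}) \<in> N \<rightarrow>\<^sub>M count_space UNIV"
    by (rule measurable_compose_countable[OF c measurable_enum[OF hb]])
  then show ?thesis using False by (simp add: Uplus_def)
qed

lemma measurable_Zp:
  fixes a :: "'p \<Rightarrow> int \<Rightarrow> nat \<Rightarrow> bool"
  assumes ha: "\<And>x j. 0 \<le> x \<Longrightarrow> (\<lambda>p. a p x j) \<in> N \<rightarrow>\<^sub>M count_space UNIV"
  shows "(\<lambda>p. Zp (a p) y n) \<in> N \<rightarrow>\<^sub>M count_space UNIV"
proof (induction n)
  case (Suc n)
  have "(\<lambda>p. Uplus (a p (int n)) z) \<in> N \<rightarrow>\<^sub>M count_space UNIV" for z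
    by (rule measurable_Uplus) (rule ha, simp)
  from measurable_compose_countable[where f="\<lambda>z p. Uplus (a p (int n)) z", OF this Suc]
  show ?case by simp
qed simp



definition shk :: "int \<Rightarrow> ((int \<times> nat) \<Rightarrow> real) \<Rightarrow> ((int \<times> nat) \<Rightarrow> real)" where
  "shk k \<omega> = (\<lambda>(x, n). \<omega> (x + k, n))"

lemma shift_shk: "shift = shk 1"
  by (auto simp: shift_def shk_def fun_eq_iff)

lemma shk_add: "shk a (shk b \<omega>) = shk (a + b) \<omega>"
  by (auto simp: shk_def fun_eq_iff ac_simps)

lemma arrow_shk: "arrow (shk k \<omega>) (shk k u) x j = arrow \<omega> u (x + k) j"
  by (simp add: arrow_def shk_def)

abbreviation Uni :: "real measure" where "Uni \<equiv> uniform_measure lborel {0..1::real}"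

lemma prob_Uni: "prob_space Uni"
  by (rule prob_space_uniform_measure) auto
lemma prob_U: "prob_space U_M"
  unfolding U_M_def by (rule prob_space_PiM) (rule prob_Uni)

lemma space_U: "space U_M = UNIV"
  unfolding U_M_def by (simp add: space_PiM)

lemma shk_restrict: "shk k = (\<lambda>\<omega>. \<lambda>i\<in>UNIV. \<omega> ((\<lambda>(x, n). (x + k, n)) i))"
  by (auto simp: shk_def fun_eq_iff)
lemma shk_meas_U: "shk k \<in> U_M \<rightarrow>\<^sub>M U_M"
  unfolding shk_restrict U_M_def
  by (intro measurable_restrict) (auto intro!: measurable_component_singleton)
lemma space_Omega: "space Omega_M = {\<omega>. \<forall>i. \<omega> i \<in> {0..1}}"
  unfolding Omega_M_def by (auto simp: space_PiM)

lemma shk_meas_Omega: "shk k \<in> Omega_M \<rightarrow>\<^sub>M Omega_M"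
  unfolding shk_restrict Omega_M_def
  by (intro measurable_restrict) (auto intro!: measurable_component_singleton)
lemma component_Omega: "(\<lambda>\<omega>. \<omega> i) \<in> Omega_M \<rightarrow>\<^sub>M borel"
proof -
  have "(\<lambda>\<omega>. \<omega> i) \<in> Omega_M \<rightarrow>\<^sub>M restrict_space borel {0..1::real}"
    unfolding Omega_M_def by (rule measurable_component_singleton) simp
  then show ?thesis by (simp add: measurable_restrict_space2_iff)
qed
lemma component_U: "(\<lambda>u. u i) \<in> U_M \<rightarrow>\<^sub>M borel"
proof -
  have "(\<lambda>u. u i) \<in> U_M \<rightarrow>\<^sub>M Uni"
    unfolding U_M_def by (rule measurable_component_singleton) simp
  moreover have "measurable U_M Uni = measurable U_M borel"
    by (rule measurable_cong_sets) auto
  ultimately show ?thesis by simp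
qed

lemma distr_U: "distr U_M U_M (shk k) = U_M"
proof -
  have "distr (Pi\<^sub>M UNIV (\<lambda>_. Uni)) (\<Pi>\<^sub>M i\<in>UNIV. (\<lambda>_. Uni) ((\<lambda>(x, n). (x + k, n)) i))
      (\<lambda>\<omega>. \<lambda>n\<in>UNIV. \<omega> ((\<lambda>(x, n). (x + k, n)) n)) = (\<Pi>\<^sub>M i\<in>UNIV. (\<lambda>_. Uni) ((\<lambda>(x, n). (x + k, n)) i))"
    by (rule distr_PiM_reindex) (auto simp: prob_Uni inj_on_def)
  then show ?thesis unfolding U_M_def shk_restrict by simp
qed
locale setting =
  fixes \<mu> :: "((int \<times> nat) \<Rightarrow> real) measure"
  assumes prob: "prob_space \<mu>"
    and stat: "stationary \<mu>"
    and erg: "ergodic \<mu>"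
    and nondeg: "nondegenerate \<mu>"
    and PS1: "PS \<mu> 1 > 0"
begin

lemma sets_mu: "sets \<mu> = sets Omega_M" using stat by (simp add: stationary_def)
lemma space_mu: "space \<mu> = space Omega_M" using sets_mu by (rule sets_eq_imp_space_eq)
lemma meas_mu: "measurable \<mu> = measurable Omega_M" by (rule ext, rule measurable_cong_sets[OF sets_mu refl])

lemma distr_shift: "distr \<mu> Omega_M (shk 1) = \<mu>" using stat by (simp add: stationary_def shift_shk)

lemma distr_shk: "distr \<mu> Omega_M (shk (int k)) = \<mu>"
proof (induction k)
  case 0
  have "shk 0 = (\<lambda>x. x)" by (auto simp: shk_def fun_eq_iff)
  then show ?case using distr_id2[of Omega_M \<mu>] sets_mu by simp
next
  case (Suc k)
  have e: "shk (int (Suc k)) = shk 1 \<circ> shk (int k)" by (auto simp: shk_add fun_eq_iff add.commute)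
  have "distr \<mu> Omega_M (shk 1 \<circ> shk (int k)) = distr (distr \<mu> Omega_M (shk (int k))) Omega_M (shk 1)"
    by (rule distr_distr[symmetric]) (auto simp: meas_mu shk_meas_Omega)
  then have "distr \<mu> Omega_M (shk 1 \<circ> shk (int k)) = \<mu>" using Suc distr_shift by simp
  then show ?case unfolding e .
qed

end



definition Aks :: "nat \<Rightarrow> ((int \<times> nat) \<Rightarrow> real) \<Rightarrow> ((int \<times> nat) \<Rightarrow> real) set" where
  "Aks k \<omega> = {u. \<forall>n. 0 < Zp (\<lambda>x. arrow \<omega> u (x + int k)) 1 n}"

definition Ts :: "((int \<times> nat) \<Rightarrow> real) \<Rightarrow> ((int \<times> nat) \<Rightarrow> real) set" where
  "Ts \<omega> = {u. \<forall>m. \<exists>k\<ge>m. u \<in> Aks k \<omega>}"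

lemma pred_comp_count: "f \<in> N \<rightarrow>\<^sub>M count_space UNIV \<Longrightarrow> Measurable.pred N (\<lambda>p. P (f p))"
  by (rule measurable_compose[OF _ measurable_count_space]) simp

lemma meas_surv:
  fixes a :: "'p \<Rightarrow> int \<Rightarrow> nat \<Rightarrow> bool"
  assumes "\<And>x j. 0 \<le> x \<Longrightarrow> Measurable.pred N (\<lambda>p. a p x j)"
  shows "Measurable.pred N (\<lambda>p. \<forall>n. 0 < Zp (a p) 1 n)"
proof (rule pred_intros_countable)
  fix n
  show "Measurable.pred N (\<lambda>p. 0 < Zp (a p) 1 n)"
    by (rule pred_comp_count, rule measurable_Zp) (use assms in auto)
qed

lemma meas_lim:
  fixes a :: "'p \<Rightarrow> int \<Rightarrow> nat \<Rightarrow> bool"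
  assumes "\<And>x j. int mz \<le> x \<Longrightarrow> Measurable.pred N (\<lambda>p. a p x j)"
  shows "Measurable.pred N (\<lambda>p. \<forall>m. \<exists>k\<ge>m. \<forall>n. 0 < Zp (\<lambda>x. a p (x + int k)) 1 n)"
proof -
  have eq: "(\<forall>m. \<exists>k\<ge>m. Q k) \<longleftrightarrow> (\<forall>m. \<exists>k. m + mz \<le> k \<and> Q k)" for Q :: "nat \<Rightarrow> bool"
    by (metis le_add1 order_trans)
  have "Measurable.pred N (\<lambda>p. m + mz \<le> k \<and> (\<forall>n. 0 < Zp (\<lambda>x. a p (x + int k)) 1 n))" for m k
  proof (cases "m + mz \<le> k")
    case True
    have "Measurable.pred N (\<lambda>p. \<forall>n. 0 < Zp (\<lambda>x. a p (x + int k)) 1 n)"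
      by (rule meas_surv) (rule assms, use True in auto)
    then show ?thesis using True by simp
  qed simp
  then have "Measurable.pred N (\<lambda>p. \<forall>m. \<exists>k. m + mz \<le> k \<and> (\<forall>n. 0 < Zp (\<lambda>x. a p (x + int k)) 1 n))"
    by (intro pred_intros_countable)
  then show ?thesis unfolding eq .
qed

lemma pred_arrow_U: "Measurable.pred U_M (\<lambda>u. arrow \<omega> u x j)"
  unfolding arrow_def pred_def
  by (rule borel_measurable_less) (auto intro: component_U)

lemma Aks_sets: "Aks k \<omega> \<in> sets U_M"
proof -
  have "Measurable.pred U_M (\<lambda>u. \<forall>n. 0 < Zp (\<lambda>x. arrow \<omega> u (x + int k)) 1 n)"
    by (rule meas_surv) (rule pred_arrow_U)
  then show ?thesis unfolding pred_def Aks_def space_U by simp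
qed

lemma Ts_sets: "Ts \<omega> \<in> sets U_M"
proof -
  have "Measurable.pred U_M (\<lambda>u. \<forall>m. \<exists>k\<ge>m. \<forall>n. 0 < Zp (\<lambda>x. arrow \<omega> u (x + int k)) 1 n)"
    by (rule meas_lim[where mz=0]) (rule pred_arrow_U)
  then show ?thesis unfolding pred_def Ts_def Aks_def space_U by simp
qed

lemma arrow_shk_fun: "(\<lambda>x. arrow (shk (int k) \<omega>) (shk (int k) u) (x + int i)) = (\<lambda>x. arrow \<omega> u (x + int (k + i)))"
  by (auto simp: arrow_shk fun_eq_iff ac_simps)

lemma Aks_shift: "Aks k \<omega> = shk (int k) -` Aks 0 (shk (int k) \<omega>)"
  using arrow_shk_fun[of k \<omega> _ 0] by (auto simp: Aks_def)

lemma Aks_shift1: "shk 1 -` Aks k (shk 1 \<omega>) = Aks (Suc k) \<omega>"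
  using arrow_shk_fun[of 1 \<omega> _ k] by (auto simp: Aks_def)

lemma Ts_shift: "Ts \<omega> = shk 1 -` Ts (shk 1 \<omega>)"
proof -
  have "shk 1 -` Ts (shk 1 \<omega>) = {u. \<forall>m. \<exists>k\<ge>m. u \<in> Aks (Suc k) \<omega>}"
  proof -
    have e: "shk 1 u \<in> Aks k (shk 1 \<omega>) \<longleftrightarrow> u \<in> Aks (Suc k) \<omega>" for u k
      using Aks_shift1[of k \<omega>] by blast
    show ?thesis unfolding Ts_def by (simp add: e)
  qed
  also have "\<dots> = Ts \<omega>"
    unfolding Ts_def
  proof (intro Collect_cong iffI allI)
    fix u m assume "\<forall>m. \<exists>k\<ge>m. u \<in> Aks (Suc k) \<omega>"
    then obtain k where "k \<ge> m" "u \<in> Aks (Suc k) \<omega>" by blast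
    then show "\<exists>k\<ge>m. u \<in> Aks k \<omega>" by (intro exI[of _ "Suc k"]) auto
  next
    fix u m assume "\<forall>m. \<exists>k\<ge>m. u \<in> Aks k \<omega>"
    then obtain k where "k \<ge> Suc m" "u \<in> Aks k \<omega>" by blast
    then show "\<exists>k\<ge>m. u \<in> Aks (Suc k) \<omega>" by (intro exI[of _ "k - 1"]) auto
  qed
  finally show ?thesis by simp
qed

lemma emeasure_U_shk: "B \<in> sets U_M \<Longrightarrow> emeasure U_M (shk k -` B) = emeasure U_M B"
  using emeasure_distr[OF shk_meas_U, of B k] distr_U[of k] by (simp add: space_U)

context setting begin

abbreviation J where "J \<equiv> joint \<mu>"

lemma J_def': "J = \<mu> \<Otimes>\<^sub>M U_M" by (simp add: joint_def)

lemma probJ: "prob_space J"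
  unfolding J_def' by (rule prob_space_pair[OF prob prob_U])

lemma sfU: "sigma_finite_measure U_M"
  by (rule prob_space_imp_sigma_finite[OF prob_U])

lemma space_J: "space J = space \<mu> \<times> UNIV"
  unfolding J_def' by (simp add: space_pair_measure space_U)

lemma pred_arrow_J: "Measurable.pred J (\<lambda>p. arrow (fst p) (snd p) x j)"
proof -
  have 1: "(\<lambda>p. fst p (x, j)) \<in> borel_measurable J"
    unfolding J_def' by (rule measurable_compose[OF measurable_fst]) (simp add: meas_mu component_Omega)
  have 2: "(\<lambda>p. snd p (x, j)) \<in> borel_measurable J"
    unfolding J_def' by (rule measurable_compose[OF measurable_snd]) (simp add: component_U)
  show ?thesis unfolding arrow_def pred_def by (rule borel_measurable_less[OF 2 1])
qed

definition Ak :: "nat \<Rightarrow> (((int \<times> nat) \<Rightarrow> real) \<times> ((int \<times> nat) \<Rightarrow> real)) set" where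
  "Ak k = {p \<in> space J. snd p \<in> Aks k (fst p)}"

definition Tj :: "(((int \<times> nat) \<Rightarrow> real) \<times> ((int \<times> nat) \<Rightarrow> real)) set" where
  "Tj = {p \<in> space J. snd p \<in> Ts (fst p)}"

lemma Ak_sets: "Ak k \<in> sets J"
proof -
  have "Measurable.pred J (\<lambda>p. \<forall>n. 0 < Zp (\<lambda>x. arrow (fst p) (snd p) (x + int k)) 1 n)"
    by (rule meas_surv[where a="\<lambda>p x. arrow (fst p) (snd p) (x + int k)"]) (rule pred_arrow_J)
  moreover have "Ak k = {p \<in> space J. \<forall>n. 0 < Zp (\<lambda>x. arrow (fst p) (snd p) (x + int k)) 1 n}"
    unfolding Ak_def Aks_def by blast
  ultimately show ?thesis unfolding pred_def by (simp only:)
qed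

lemma Tj_sets: "Tj \<in> sets J"
proof -
  have "Measurable.pred J (\<lambda>p. \<forall>m. \<exists>k\<ge>m. \<forall>n. 0 < Zp (\<lambda>x. arrow (fst p) (snd p) (x + int k)) 1 n)"
    by (rule meas_lim[where mz=0 and a="\<lambda>p x. arrow (fst p) (snd p) x"]) (rule pred_arrow_J)
  moreover have "Tj = {p \<in> space J. \<forall>m. \<exists>k\<ge>m. \<forall>n. 0 < Zp (\<lambda>x. arrow (fst p) (snd p) (x + int k)) 1 n}"
    unfolding Tj_def Ts_def Aks_def by blast
  ultimately show ?thesis unfolding pred_def by (simp only:)
qed

lemma Ak_sec: "\<omega> \<in> space \<mu> \<Longrightarrow> Pair \<omega> -` Ak k = Aks k \<omega>"
  by (auto simp: Ak_def space_J)

lemma Tj_sec: "\<omega> \<in> space \<mu> \<Longrightarrow> Pair \<omega> -` Tj = Ts \<omega>"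
  by (auto simp: Tj_def space_J)

end



lemma sets_Uni: "sets Uni = sets borel" by simp

lemma indep_coords: "prob_space.indep_vars U_M (\<lambda>_. borel) (\<lambda>i u. u i) UNIV"
proof -
  interpret U: prob_space U_M by (rule prob_U)
  have rv: "(\<lambda>u. u i) \<in> U_M \<rightarrow>\<^sub>M borel" for i :: "int \<times> nat" by (rule component_U)
  have l: "distr U_M (\<Pi>\<^sub>M i\<in>UNIV. borel) (\<lambda>x. \<lambda>i\<in>UNIV. x i) = U_M"
  proof -
    have s: "sets (\<Pi>\<^sub>M i\<in>(UNIV::(int \<times> nat) set). (borel::real measure)) = sets U_M"
      unfolding U_M_def by (rule sets_PiM_cong) auto
    have "distr U_M (\<Pi>\<^sub>M i\<in>UNIV. borel) (\<lambda>x. \<lambda>i\<in>UNIV. x i) = distr U_M (\<Pi>\<^sub>M i\<in>UNIV. borel) (\<lambda>x. x)"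
      by (simp add: restrict_UNIV)
    also have "\<dots> = U_M" by (rule distr_id2[OF s])
    finally show ?thesis .
  qed
  have r: "distr U_M borel (\<lambda>u. u i) = Uni" for i :: "int \<times> nat"
  proof -
    have "distr U_M borel (\<lambda>u. u i) = distr U_M Uni (\<lambda>u. u i)"
      by (rule distr_cong) auto
    also have "\<dots> = Uni" unfolding U_M_def by (rule distr_PiM_component) (auto simp: prob_Uni)
    finally show ?thesis .
  qed
  show ?thesis
  proof (subst U.indep_vars_iff_distr_eq_PiM)
    show "distr U_M (Pi\<^sub>M UNIV (\<lambda>_. borel)) (\<lambda>x. \<lambda>i\<in>UNIV. x i) = (\<Pi>\<^sub>M i\<in>UNIV. distr U_M borel (\<lambda>u. u i))"
      unfolding l r by (simp add: U_M_def)
  qed (auto intro: rv)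
qed

definition Esig :: "(int \<times> nat) \<Rightarrow> ((int \<times> nat) \<Rightarrow> real) set set" where
  "Esig i = sigma_sets UNIV {(\<lambda>u. u i) -` A \<inter> UNIV | A. A \<in> sets (borel::real measure)}"

definition Asite :: "nat \<Rightarrow> ((int \<times> nat) \<Rightarrow> real) set set" where
  "Asite n = sigma_sets UNIV (\<Union>i\<in>Pair (int n) ` UNIV. Esig i)"

lemma indep_sites: "prob_space.indep_sets U_M Asite UNIV"
proof -
  interpret U: prob_space U_M by (rule prob_U)
  have "U.indep_sets Esig UNIV"
    using indep_coords unfolding U.indep_vars_def Esig_def space_U by simp
  then have i: "U.indep_sets Esig (\<Union>n\<in>UNIV. Pair (int n) ` UNIV)"
    by (rule U.indep_sets_mono_index[rotated]) simp
  have st: "Int_stable (Esig i)" for i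
  proof -
    interpret sigma_algebra UNIV "Esig i" unfolding Esig_def by (rule sigma_algebra_sigma_sets) simp
    show ?thesis by (rule Int_stable)
  qed
  have dj: "disjoint_family_on (\<lambda>n::nat. Pair (int n) ` UNIV) UNIV"
    unfolding disjoint_family_on_def by auto
  show ?thesis
    using U.indep_sets_collect_sigma[OF i st dj] unfolding Asite_def space_U by simp
qed

lemma K01: "emeasure U_M (Ts \<omega>) = 0 \<or> emeasure U_M (Ts \<omega>) = 1"
proof -
  interpret U: prob_space U_M by (rule prob_U)
  have sa: "sigma_algebra (space U_M) (Asite n)" for n
    unfolding Asite_def space_U by (rule sigma_algebra_sigma_sets) simp
  have tail: "Ts \<omega> \<in> U.tail_events Asite"
    unfolding U.tail_events_def
  proof (intro InterI, clarify)
    fix n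
    define G where "G = \<Union> (Asite ` {n..})"
    define Nn where "Nn = sigma (UNIV :: ((int \<times> nat) \<Rightarrow> real) set) G"
    have sN: "sets Nn = sigma_sets UNIV G" unfolding Nn_def by (rule sets_measure_of) simp
    have spN: "space Nn = UNIV" unfolding Nn_def by (rule space_measure_of) simp
    have pa: "Measurable.pred Nn (\<lambda>u. arrow \<omega> u x j)" if x: "int n \<le> x" for x j
    proof -
      have eq: "{u. u (x, j) < \<omega> (x, j)} = (\<lambda>u. u (x, j)) -` {..< \<omega> (x, j)} \<inter> UNIV" by auto
      have "(\<lambda>u. u (x, j)) -` {..< \<omega> (x, j)} \<inter> UNIV \<in> {(\<lambda>u. u (x, j)) -` A \<inter> UNIV | A. A \<in> sets (borel::real measure)}"
        by (intro CollectI exI[of _ "{..< \<omega> (x, j)}"]) simp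
      then have e1: "{u. u (x, j) < \<omega> (x, j)} \<in> Esig (x, j)"
        unfolding Esig_def eq by (rule sigma_sets.Basic)
      have xx: "(x, j) \<in> Pair (int (nat x)) ` UNIV" using x by auto
      have "{u. u (x, j) < \<omega> (x, j)} \<in> (\<Union>i\<in>Pair (int (nat x)) ` UNIV. Esig i)"
        by (rule UN_I[where B=Esig, OF xx e1])
      then have e2: "{u. u (x, j) < \<omega> (x, j)} \<in> Asite (nat x)"
        unfolding Asite_def by (rule sigma_sets.Basic)
      have nx: "nat x \<in> {n..}" using x by auto
      have "{u. u (x, j) < \<omega> (x, j)} \<in> G"
        unfolding G_def by (rule UN_I[where B=Asite, OF nx e2])
      then have "{u. u (x, j) < \<omega> (x, j)} \<in> sets Nn"
        unfolding sN by (rule sigma_sets.Basic)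
      then show ?thesis unfolding pred_def arrow_def spN by simp
    qed
    have "Measurable.pred Nn (\<lambda>u. \<forall>m. \<exists>k\<ge>m. \<forall>n'. 0 < Zp (\<lambda>x. arrow \<omega> u (x + int k)) 1 n')"
      by (rule meas_lim[where mz=n and a="\<lambda>u. arrow \<omega> u"]) (rule pa)
    moreover have "Ts \<omega> = {u \<in> space Nn. \<forall>m. \<exists>k\<ge>m. \<forall>n'. 0 < Zp (\<lambda>x. arrow \<omega> u (x + int k)) 1 n'}"
      unfolding Ts_def Aks_def spN by simp
    ultimately have "Ts \<omega> \<in> sets Nn" unfolding pred_def by (simp only:)
    then show "Ts \<omega> \<in> sigma_sets (space U_M) (\<Union> (Asite ` {n..}))"
      unfolding sN G_def space_U .
  qed
  have "U.prob (Ts \<omega>) = 0 \<or> U.prob (Ts \<omega>) = 1"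
    by (rule U.kolmogorov_0_1_law[OF sa indep_sites tail])
  then show ?thesis using U.emeasure_eq_measure[of "Ts \<omega>"] by auto
qed




context setting begin

lemma shk_space: "\<omega> \<in> space \<mu> \<Longrightarrow> shk k \<omega> \<in> space \<mu>"
  using measurable_space[OF shk_meas_Omega] space_mu by auto

lemma L_shift: "emeasure U_M (Ts (shk 1 \<omega>)) = emeasure U_M (Ts \<omega>)"
  using emeasure_U_shk[OF Ts_sets, of 1 "shk 1 \<omega>"] Ts_shift[of \<omega>] by simp

definition D where "D = {\<omega> \<in> space \<mu>. emeasure U_M (Ts \<omega>) = 1}"

lemma Tj_sets': "Tj \<in> sets (\<mu> \<Otimes>\<^sub>M U_M)" using Tj_sets J_def' by simp
lemma Ak_sets': "Ak k \<in> sets (\<mu> \<Otimes>\<^sub>M U_M)" using Ak_sets J_def' by simp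

lemma L_meas: "(\<lambda>\<omega>. emeasure U_M (Ts \<omega>)) \<in> borel_measurable \<mu>"
proof -
  have "(\<lambda>\<omega>. emeasure U_M (Pair \<omega> -` Tj)) \<in> borel_measurable \<mu>"
    by (rule sigma_finite_measure.measurable_emeasure_Pair[OF sfU Tj_sets'])
  then show ?thesis by (rule measurable_cong[THEN iffD1, rotated]) (simp add: Tj_sec)
qed

lemma D_sets: "D \<in> sets \<mu>"
proof -
  have "(\<lambda>\<omega>. emeasure U_M (Ts \<omega>)) -` {1} \<inter> space \<mu> \<in> sets \<mu>"
    by (rule measurable_sets[OF L_meas]) simp
  moreover have "(\<lambda>\<omega>. emeasure U_M (Ts \<omega>)) -` {1} \<inter> space \<mu> = D" unfolding D_def by auto
  ultimately show ?thesis by simp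
qed

lemma D_inv: "shift -` D \<inter> space \<mu> = D"
  unfolding D_def shift_shk using L_shift shk_space by auto

lemma D01: "measure \<mu> D = 0 \<or> measure \<mu> D = 1"
  using erg D_sets D_inv unfolding ergodic_def by blast

lemma Tj_D: "emeasure J Tj = emeasure \<mu> D"
proof -
  have "emeasure J Tj = (\<integral>\<^sup>+\<omega>. emeasure U_M (Pair \<omega> -` Tj) \<partial>\<mu>)"
    unfolding J_def' by (rule sigma_finite_measure.emeasure_pair_measure_alt[OF sfU Tj_sets'])
  also have "\<dots> = (\<integral>\<^sup>+\<omega>. indicator D \<omega> \<partial>\<mu>)"
  proof (rule nn_integral_cong)
    fix \<omega> assume w: "\<omega> \<in> space \<mu>"
    show "emeasure U_M (Pair \<omega> -` Tj) = indicator D \<omega>"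
      using K01[of \<omega>] w unfolding Tj_sec[OF w] D_def by (auto simp: indicator_def)
  qed
  also have "\<dots> = emeasure \<mu> D" using D_sets by simp
  finally show ?thesis .
qed

lemma g_meas: "(\<lambda>\<omega>. emeasure U_M (Aks 0 \<omega>)) \<in> borel_measurable Omega_M"
proof -
  have "(\<lambda>\<omega>. emeasure U_M (Pair \<omega> -` Ak 0)) \<in> borel_measurable \<mu>"
    by (rule sigma_finite_measure.measurable_emeasure_Pair[OF sfU Ak_sets'])
  then have "(\<lambda>\<omega>. emeasure U_M (Aks 0 \<omega>)) \<in> borel_measurable \<mu>"
    by (rule measurable_cong[THEN iffD1, rotated]) (simp add: Ak_sec)
  then show ?thesis by (simp add: meas_mu)
qed

lemma Ak_eq: "emeasure J (Ak k) = emeasure J (Ak 0)"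
proof -
  have sec: "emeasure J (Ak i) = (\<integral>\<^sup>+\<omega>. emeasure U_M (Aks i \<omega>) \<partial>\<mu>)" for i
  proof -
    have "emeasure J (Ak i) = (\<integral>\<^sup>+\<omega>. emeasure U_M (Pair \<omega> -` Ak i) \<partial>\<mu>)"
      unfolding J_def' by (rule sigma_finite_measure.emeasure_pair_measure_alt[OF sfU Ak_sets'])
    also have "\<dots> = (\<integral>\<^sup>+\<omega>. emeasure U_M (Aks i \<omega>) \<partial>\<mu>)"
      by (rule nn_integral_cong) (simp add: Ak_sec)
    finally show ?thesis .
  qed
  have "(\<integral>\<^sup>+\<omega>. emeasure U_M (Aks k \<omega>) \<partial>\<mu>) = (\<integral>\<^sup>+\<omega>. emeasure U_M (Aks 0 (shk (int k) \<omega>)) \<partial>\<mu>)"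
  proof (rule nn_integral_cong)
    fix \<omega>
    show "emeasure U_M (Aks k \<omega>) = emeasure U_M (Aks 0 (shk (int k) \<omega>))"
      using emeasure_U_shk[OF Aks_sets, of "int k" 0 "shk (int k) \<omega>"] Aks_shift[of k \<omega>] by simp
  qed
  also have "\<dots> = (\<integral>\<^sup>+\<omega>. emeasure U_M (Aks 0 \<omega>) \<partial>(distr \<mu> Omega_M (shk (int k))))"
    by (rule nn_integral_distr[symmetric]) (auto simp: meas_mu shk_meas_Omega g_meas)
  also have "\<dots> = (\<integral>\<^sup>+\<omega>. emeasure U_M (Aks 0 \<omega>) \<partial>\<mu>)" by (simp add: distr_shk)
  finally show ?thesis using sec by simp
qed

lemma PS_eq: "PS \<mu> 1 = measure J (Ak 0)"
proof -
  have "{p \<in> space J. \<forall>n. 0 < Zplus (fst p) (snd p) 1 n} = Ak 0"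
    unfolding Ak_def Aks_def by (simp add: Zplus_Zp)
  then show ?thesis unfolding PS_def by simp
qed

lemma Tj_ge: "PS \<mu> 1 \<le> measure J Tj"
proof -
  interpret J: prob_space J by (rule probJ)
  define B where "B m = (\<Union>k\<in>{m..}. Ak k)" for m
  have Bs: "range B \<subseteq> sets J" unfolding B_def using Ak_sets by (auto intro!: sets.countable_UN')
  have dec: "decseq B" unfolding B_def decseq_def by (intro allI impI UN_mono) auto
  have "(\<Inter>m. B m) = Tj"
    unfolding B_def Tj_def Ts_def Ak_def by auto
  then have lim: "(\<lambda>m. measure J (B m)) \<longlonglongrightarrow> measure J Tj"
    using J.finite_Lim_measure_decseq[OF Bs dec] by simp
  have "PS \<mu> 1 \<le> measure J (B m)" for m
  proof -
    have "measure J (Ak m) = measure J (Ak 0)" using Ak_eq[of m] by (simp add: measure_def)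
    moreover have "measure J (Ak m) \<le> measure J (B m)"
      using Bs unfolding B_def by (intro J.finite_measure_mono) auto
    ultimately show ?thesis using PS_eq by simp
  qed
  then show ?thesis by (intro LIMSEQ_le_const[OF lim]) auto
qed

lemma Union_one: "measure J (\<Union>k. Ak k) = 1"
proof -
  interpret J: prob_space J by (rule probJ)
  have "measure J Tj = measure \<mu> D" using Tj_D by (simp add: measure_def)
  then have "measure J Tj = 1" using D01 Tj_ge PS1 by auto
  moreover have "Tj \<subseteq> (\<Union>k. Ak k)" unfolding Tj_def Ts_def Ak_def by auto
  moreover have "(\<Union>k. Ak k) \<in> sets J" using Ak_sets by auto
  ultimately have "1 \<le> measure J (\<Union>k. Ak k)" by (metis J.finite_measure_mono)
  then show ?thesis using J.prob_le_1 by (simp add: antisym)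
qed

end


context setting begin

lemma AE_good: "AE p in J. goodA (arrow (fst p) (snd p))"
proof -
  have "AE p in J. \<forall>x. nondegenerate_seq (arrow (fst p) (snd p) x)"
    using nondeg unfolding nondegenerate_def by simp
  then show ?thesis by eventually_elim (auto simp: goodA_def intro: nondeg_good)
qed

definition Fy where "Fy K y = {p \<in> space J. \<forall>y'\<ge>y. 1 \<le> Zp (arrow (fst p) (snd p)) y' K}"
definition Cb where "Cb K = (\<Union>k\<in>{..K}. Ak k)"
definition Surv where "Surv y = {p \<in> space J. \<forall>n. 0 < Zplus (fst p) (snd p) y n}"

lemma Fy_sets: "Fy K y \<in> sets J"
proof -
  have m: "(\<lambda>p. Zp (arrow (fst p) (snd p)) y' K) \<in> J \<rightarrow>\<^sub>M count_space UNIV" for y'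
    by (rule measurable_Zp[where a="\<lambda>p. arrow (fst p) (snd p)"]) (rule pred_arrow_J)
  have "Measurable.pred J (\<lambda>p. y \<le> y' \<longrightarrow> 1 \<le> Zp (arrow (fst p) (snd p)) y' K)" for y'
    by (rule pred_comp_count[OF m, where P="\<lambda>z. y \<le> y' \<longrightarrow> 1 \<le> z"])
  then have "Measurable.pred J (\<lambda>p. \<forall>y'. y \<le> y' \<longrightarrow> 1 \<le> Zp (arrow (fst p) (snd p)) y' K)"
    by (intro pred_intros_countable)
  then show ?thesis unfolding pred_def Fy_def by (simp only:)
qed

lemma Surv_sets: "Surv y \<in> sets J"
proof -
  have m: "(\<lambda>p. Zp (arrow (fst p) (snd p)) y n) \<in> J \<rightarrow>\<^sub>M count_space UNIV" for n
    by (rule measurable_Zp[where a="\<lambda>p. arrow (fst p) (snd p)"]) (rule pred_arrow_J)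
  have "Measurable.pred J (\<lambda>p. 0 < Zp (arrow (fst p) (snd p)) y n)" for n
    by (rule pred_comp_count[OF m, where P="\<lambda>z. 0 < z"])
  then have "Measurable.pred J (\<lambda>p. \<forall>n. 0 < Zp (arrow (fst p) (snd p)) y n)"
    by (intro pred_intros_countable)
  moreover have "Surv y = {p \<in> space J. \<forall>n. 0 < Zp (arrow (fst p) (snd p)) y n}"
    unfolding Surv_def by (simp add: Zplus_Zp)
  ultimately show ?thesis unfolding pred_def by (simp only:)
qed

lemma PS_Surv: "PS \<mu> y = measure J (Surv y)"
  unfolding PS_def Surv_def by simp

lemma Cb_sets: "Cb K \<in> sets J"
  unfolding Cb_def using Ak_sets by auto

lemma Cb_lim: "(\<lambda>K. measure J (Cb K)) \<longlonglongrightarrow> 1"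
proof -
  interpret J: prob_space J by (rule probJ)
  have "range Cb \<subseteq> sets J" using Cb_sets by auto
  moreover have "incseq Cb" unfolding Cb_def incseq_def by (intro allI impI UN_mono) auto
  ultimately have "(\<lambda>K. measure J (Cb K)) \<longlonglongrightarrow> measure J (\<Union>K. Cb K)"
    by (rule J.finite_Lim_measure_incseq)
  moreover have "(\<Union>K. Cb K) = (\<Union>k. Ak k)" unfolding Cb_def by auto
  ultimately show ?thesis using Union_one by simp
qed

lemma Fy_lim: "(\<lambda>y. measure J (Fy K y)) \<longlonglongrightarrow> 1"
proof -
  interpret J: prob_space J by (rule probJ)
  have "range (Fy K) \<subseteq> sets J" using Fy_sets by auto
  moreover have "incseq (Fy K)" unfolding Fy_def incseq_def by auto
  ultimately have "(\<lambda>y. measure J (Fy K y)) \<longlonglongrightarrow> measure J (\<Union>y. Fy K y)"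
    by (rule J.finite_Lim_measure_incseq)
  moreover have "measure J (\<Union>y. Fy K y) = measure J (space J)"
  proof (rule J.finite_measure_eq_AE)
    show "AE p in J. p \<in> (\<Union>y. Fy K y) \<longleftrightarrow> p \<in> space J"
      using AE_good AE_space
    proof eventually_elim
      case (elim p)
      obtain Y where "\<forall>y\<ge>Y. 1 \<le> Zp (arrow (fst p) (snd p)) y K"
        using Zp_unbounded'[OF elim(1)] by blast
      then show ?case using elim(2) unfolding Fy_def by auto
    qed
    show "(\<Union>y. Fy K y) \<in> sets J" using Fy_sets by auto
  qed simp
  ultimately show ?thesis by (simp add: J.prob_space)
qed

lemma couple_AE: "AE p in J. p \<in> Fy K y \<inter> Cb K \<longrightarrow> p \<in> Surv y"
  using AE_good
proof eventually_elim
  case (elim p)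
  show ?case
  proof
    assume p: "p \<in> Fy K y \<inter> Cb K"
    let ?a = "arrow (fst p) (snd p)"
    obtain k where k: "k \<le> K" "p \<in> Ak k" using p unfolding Cb_def by auto
    have K1: "1 \<le> Zp ?a y K" using p unfolding Fy_def by auto
    have s: "\<forall>n. 0 < Zp (\<lambda>x. ?a (x + int k)) 1 n" using k unfolding Ak_def Aks_def by auto
    have "1 \<le> Zp ?a y k"
    proof (rule ccontr)
      assume "\<not> 1 \<le> Zp ?a y k"
      then have "Zp ?a y K = 0" using Zp_absorb[of ?a y k K] k by auto
      then show False using K1 by simp
    qed
    then have "\<forall>n. 0 < Zp ?a y n" using Zp_couple[OF elim _ s] by auto
    then show "p \<in> Surv y" using p unfolding Surv_def Fy_def by (simp add: Zplus_Zp)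
  qed
qed

theorem main: "\<forall>\<epsilon>>0. \<exists>y. PS \<mu> y > 1 - \<epsilon>"
proof (intro allI impI)
  interpret J: prob_space J by (rule probJ)
  fix \<epsilon> :: real assume e: "\<epsilon> > 0"
  have e2: "1 - \<epsilon> / 2 < 1" using e by simp
  have "eventually (\<lambda>K. measure J (Cb K) > 1 - \<epsilon> / 2) sequentially"
    by (rule order_tendstoD(1)[OF Cb_lim e2])
  then obtain K where K: "measure J (Cb K) > 1 - \<epsilon> / 2"
    unfolding eventually_sequentially by blast
  have "eventually (\<lambda>y. measure J (Fy K y) > 1 - \<epsilon> / 2) sequentially"
    by (rule order_tendstoD(1)[OF Fy_lim e2])
  then obtain y where y: "measure J (Fy K y) > 1 - \<epsilon> / 2"
    unfolding eventually_sequentially by blast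
  have a: "measure J (Fy K y \<inter> Cb K) \<le> measure J (Surv y)"
    by (rule J.finite_measure_mono_AE[OF couple_AE Surv_sets])
  have b: "measure J (Fy K y \<union> Cb K) = measure J (Fy K y) + measure J (Cb K - Fy K y)"
    by (rule J.finite_measure_Union'[OF Fy_sets Cb_sets])
  have u: "(Fy K y \<inter> Cb K) \<union> (Cb K - Fy K y) = Cb K" by blast
  have c: "measure J ((Fy K y \<inter> Cb K) \<union> (Cb K - Fy K y)) = measure J (Fy K y \<inter> Cb K) + measure J (Cb K - Fy K y)"
    by (rule J.finite_measure_Union) (use Cb_sets Fy_sets in auto)
  have d: "measure J (Fy K y \<union> Cb K) \<le> 1" by (rule J.prob_le_1)
  have "measure J (Surv y) > 1 - \<epsilon>" using a b c d K y unfolding u by linarith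
  then show "\<exists>y. PS \<mu> y > 1 - \<epsilon>" using PS_Surv by auto
qed

end

theorem lemma4p3:
  fixes \<mu> :: "((int \<times> nat) \<Rightarrow> real) measure"
  assumes "prob_space \<mu>"
    and "stationary \<mu>"
    and "ergodic \<mu>"
    and "elliptic \<mu>"
    and "nondegenerate \<mu>"
    and "PS \<mu> 1 > 0"
  shows "\<forall>\<epsilon>>0. \<exists>y. PS \<mu> y > 1 - \<epsilon>"
  using setting.main[OF setting.intro[OF assms(1) assms(2) assms(3) assms(5) assms(6)]] .

end
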